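(* Fix $\sigma\in\mathbb{R}$ and $k,d\in\mathbb{Z}_{\ge0}$. Then $\mathrm{span}_{\mathbb{Q}}(L^o_{k,d}(\sigma))=\mathrm{span}_{\mathbb{Q}}(M^o_{k,d}(\sigma))$ and $\mathrm{span}_{\mathbb{Q}}(L^e_{k,d}(\sigma))=\mathrm{span}_{\mathbb{Q}}(M^e_{k,d}(\sigma))$.
   Context: $A(\theta)=\log|2\sin(\theta/2)|$, $\mathrm{Ls}_{\mathbf{k}}^{\mathbf{l}}(\sigma)=(-1)^n\int_0^{\sigma}\int_0^{\theta_n}\cdots\int_0^{\theta_2}\prod_{u=1}^n\theta_u^{l_u}A(\theta_u)^{k_u-1-l_u}\,d\theta_1\cdots d\theta_n$, $\mathrm{Ls}_\emptyset^\emptyset=1$. For $\mathbf{k}=(k_1,\dots,k_n)$, $\mathbf{l}=(l_1,\dots,l_n)$ put $s(\mathbf{k},\mathbf{l})=\sum_u(k_u-1-l_u)$ ($=0$ if $n=0$). $L^o_{k,d}(\sigma)$ (resp. $L^e_{k,d}(\sigma)$) is the set of real numbers $\mathrm{Ls}_{\mathbf{k}}^{\mathbf{l}}(\sigma)$ with $0\le n\le k$, $k_1+\dots+k_n=k$, $k_u\ge1$, $l_u\ge0$, $k_u-1-l_u\ge0$, $s(\mathbf{k},\mathbf{l})\le d$ and $s(\mathbf{k},\mathbf{l})$ odd (resp. even). $M^o_{k,d}(\sigma)$ (resp. $M^e_{k,d}(\sigma)$) is the set of real numbers $\sigma^m\mathrm{Ls}_{\mathbf{k}}^{\mathbf{l}}(\sigma)$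 with $m\ge0$, $m+k_1+\dots+k_n=k$, $0\le n\le k$, $k_u\ge2$, $l_u\ge0$, $k_u-1-l_u\ge1$, $s(\mathbf{k},\mathbf{l})\le d$ and $s(\mathbf{k},\mathbf{l})$ odd (resp. even). *)

theory Defs
  imports "HOL-Analysis.Analysis"
begin

definition Afun :: "real \<Rightarrow> real" where
  "Afun \<theta> = ln \<bar>2 * sin (\<theta> / 2)\<bar>"

text \<open>Iterated integral, outermost integrand first:
  itint [g_n, ..., g_1] x = int_0^x g_n(t_n) int_0^{t_n} ... int_0^{t_2} g_1(t_1) dt_1 ... dt_n.
  Oriented integrals (LBINT over 0..x is negative of LBINT over x..0 when x < 0).\<close>
fun itint :: "(real \<Rightarrow> real) list \<Rightarrow> real \<Rightarrow> real" where
  "itint [] x = 1"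
| "itint (g # gs) x = (LBINT t=ereal 0..ereal x. g t * itint gs t)"

definition lsint :: "nat \<Rightarrow> nat \<Rightarrow> real \<Rightarrow> real" where
  "lsint k l \<theta> = \<theta> ^ l * Afun \<theta> ^ (k - 1 - l)"

text \<open>Ls_ks^ls(sigma), ks = (k_1..k_n), ls = (l_1..l_n), theta_1 innermost.\<close>
definition Ls :: "nat list \<Rightarrow> nat list \<Rightarrow> real \<Rightarrow> real" where
  "Ls ks ls \<sigma> = (-1) ^ length ks * itint (rev (map2 lsint ks ls)) \<sigma>"

definition sdeg :: "nat list \<Rightarrow> nat list \<Rightarrow> nat" where
  "sdeg ks ls = (\<Sum>u<length ks. ks ! u - 1 - ls ! u)"

definition Lset :: "bool \<Rightarrow> nat \<Rightarrow> nat \<Rightarrow> real \<Rightarrow> real set" where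
  "Lset oddp k d \<sigma> = {Ls ks ls \<sigma> | ks ls.
      length ls = length ks \<and> length ks \<le> k \<and> sum_list ks = k \<and>
      (\<forall>u<length ks. 1 \<le> ks ! u \<and> ls ! u + 1 \<le> ks ! u) \<and>
      sdeg ks ls \<le> d \<and> odd (sdeg ks ls) = oddp}"

definition Mset :: "bool \<Rightarrow> nat \<Rightarrow> nat \<Rightarrow> real \<Rightarrow> real set" where
  "Mset oddp k d \<sigma> = {\<sigma> ^ m * Ls ks ls \<sigma> | m ks ls.
      m + sum_list ks = k \<and> length ls = length ks \<and> length ks \<le> k \<and>
      (\<forall>u<length ks. 2 \<le> ks ! u \<and> ls ! u + 2 \<le> ks ! u) \<and>
      sdeg ks ls \<le> d \<and> odd (sdeg ks ls) = oddp}"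

definition qspan :: "real set \<Rightarrow> real set" where
  "qspan S = {x. \<exists>F c. finite F \<and> F \<subseteq> S \<and> (\<forall>s\<in>F. c s \<in> \<rat>) \<and> x = (\<Sum>s\<in>F. c s * s)}"

end

theory Submission
  imports Defs
begin


lemma isqrt_int_right:
  fixes c R :: real assumes "0 \<le> R"
  shows "(\<lambda>t. inverse (sqrt \<bar>t - c\<bar>)) integrable_on {c..c+R}"
proof -
  have "((\<lambda>t. inverse (sqrt \<bar>t - c\<bar>)) has_integral (2 * sqrt ((c+R) - c) - 2 * sqrt (c - c))) {c..c+R}"
  proof (rule fundamental_theorem_of_calculus_interior)
    show "continuous_on {c..c + R} (\<lambda>t. 2 * sqrt (t - c))"
      by (intro continuous_intros)
    fix x assume x: "x \<in> {c<..<c+R}"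
    have d: "DERIV sqrt (x-c) :> inverse (sqrt (x-c))/2" using DERIV_real_sqrt x by auto
    have "((\<lambda>t. 2 * sqrt (t - c)) has_real_derivative 2 * (inverse (sqrt (x - c)) / 2 * 1)) (at x)"
      by (intro DERIV_cmult DERIV_chain2[where f=sqrt and g="\<lambda>t. t - c", OF d]) (auto intro!: derivative_eq_intros)
    then show "((\<lambda>t. 2 * sqrt (t - c)) has_vector_derivative inverse (sqrt \<bar>x - c\<bar>)) (at x)"
      using x by (simp add: has_real_derivative_iff_has_vector_derivative)
  qed (use assms in auto)
  then show ?thesis by blast
qed

lemma isqrt_int_left:
  fixes c R :: real assumes "0 \<le> R"
  shows "(\<lambda>t. inverse (sqrt \<bar>t - c\<bar>)) integrable_on {c-R..c}"
proof -
  have "((\<lambda>t. inverse (sqrt \<bar>t - c\<bar>)) has_integral (- 2 * sqrt (c - c) - (- 2 * sqrt (c - (c - R))))) {c-R..c}"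
  proof (rule fundamental_theorem_of_calculus_interior)
    show "continuous_on {c-R..c} (\<lambda>t. - 2 * sqrt (c - t))"
      by (intro continuous_intros)
    fix x assume x: "x \<in> {c-R<..<c}"
    have d: "DERIV sqrt (c-x) :> inverse (sqrt (c-x))/2" using DERIV_real_sqrt x by auto
    have "((\<lambda>t. - 2 * sqrt (c - t)) has_real_derivative - 2 * (inverse (sqrt (c - x)) / 2 * (-1))) (at x)"
      by (intro DERIV_cmult DERIV_chain2[where f=sqrt and g="\<lambda>t. c - t", OF d]) (auto intro!: derivative_eq_intros)
    then show "((\<lambda>t. - 2 * sqrt (c - t)) has_vector_derivative inverse (sqrt \<bar>x - c\<bar>)) (at x)"
      using x by (simp add: has_real_derivative_iff_has_vector_derivative)
  qed (use assms in auto)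
  then show ?thesis by blast
qed

lemma isqrt_int:
  fixes c a b :: real
  shows "(\<lambda>t. inverse (sqrt \<bar>t - c\<bar>)) integrable_on {a..b}"
proof -
  define R where "R = \<bar>a\<bar> + \<bar>b\<bar> + \<bar>c\<bar> + 1"
  have R: "0 \<le> R" unfolding R_def by simp
  have "(\<lambda>t. inverse (sqrt \<bar>t - c\<bar>)) integrable_on {c-R..c+R}"
    by (rule Henstock_Kurzweil_Integration.integrable_combine[OF _ _ isqrt_int_left[OF R] isqrt_int_right[OF R]]) (use R in auto)
  then show ?thesis
    by (rule integrable_on_subinterval) (auto simp: R_def)
qed



lemma sin_lower:
  fixes u :: real assumes "\<bar>u\<bar> \<le> 1"
  shows "\<bar>u\<bar> / 2 \<le> \<bar>sin u\<bar>"
proof -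
  have "\<bar>sin u - (\<Sum>m<3. sin_coeff m * u ^ m)\<bar> \<le> inverse (fact 3) * \<bar>u\<bar> ^ 3"
    by (rule Maclaurin_sin_bound)
  moreover have "(\<Sum>m<3. sin_coeff m * u ^ m) = u"
    by (simp add: eval_nat_numeral sin_coeff_def)
  moreover have "\<bar>u\<bar> ^ 3 \<le> \<bar>u\<bar>"
  proof -
    have "\<bar>u\<bar> ^ 3 = \<bar>u\<bar> * \<bar>u\<bar>^2" by (simp add: eval_nat_numeral)
    also have "\<dots> \<le> \<bar>u\<bar> * 1" using assms by (intro mult_left_mono) (auto simp: power_le_one abs_square_le_1)
    finally show ?thesis by simp
  qed
  ultimately have "\<bar>sin u - u\<bar> \<le> \<bar>u\<bar> / 6" by (simp add: eval_nat_numeral)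
  then show ?thesis by linarith
qed

lemma sin_shift_abs:
  fixes x :: real and m :: int
  shows "\<bar>sin (x - of_int m * pi)\<bar> = \<bar>sin x\<bar>"
proof -
  have s: "sin (of_int m * pi) = 0" using sin_zero_iff_int2 by blast
  then have "cos (of_int m * pi)^2 = 1" using sin_cos_squared_add[of "of_int m * pi"] by simp
  then have c: "\<bar>cos (of_int m * pi)\<bar> = 1"
    by (metis abs_power2 abs_ge_zero power2_eq_1_iff abs_minus_cancel abs_one)
  show ?thesis by (simp add: sin_diff s abs_mult c)
qed

lemma A_bound:
  fixes t :: real and j N :: nat
  assumes j: "1 \<le> j" and tN: "\<bar>t\<bar> \<le> 2 * pi * N"
  shows "\<bar>Afun t\<bar> ^ j \<le> 1 + 2 * (2 * real j) ^ j * (\<Sum>m\<in>{- int N..int N}. inverse (sqrt \<bar>t - 2 * pi * of_int m\<bar>))"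
proof -
  define S where "S = (\<Sum>m\<in>{- int N..int N}. inverse (sqrt \<bar>t - 2 * pi * of_int m\<bar>))"
  have S0: "0 \<le> S" unfolding S_def by (intro sum_nonneg) auto
  have R1: "1 \<le> 1 + 2 * (2 * real j) ^ j * S" using S0 by simp
  define y where "y = \<bar>2 * sin (t / 2)\<bar>"
  have A: "Afun t = ln y" by (simp add: Afun_def y_def)
  have y0: "0 \<le> y" by (simp add: y_def)
  consider "y = 0" | "1 \<le> y" | "0 < y" "y < 1" using y0 by linarith
  then have "\<bar>Afun t\<bar> ^ j \<le> 1 + 2 * (2 * real j) ^ j * S"
  proof cases
    case 1
    then have "\<bar>Afun t\<bar> ^ j = 0" using A j by simp
    with R1 show ?thesis by linarith
  next
    case 2
    have "ln y \<le> ln 2" using 2 by (subst ln_le_cancel_iff) (auto simp: y_def abs_mult abs_sin_le_one)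
    also have "ln 2 < (1::real)" by (rule ln_2_less_1)
    finally have "\<bar>Afun t\<bar> \<le> 1" using A 2 by simp
    then have "\<bar>Afun t\<bar> ^ j \<le> 1" by (simp add: power_le_one)
    then show ?thesis using R1 by linarith
  next
    case 3
    define m where "m = \<lfloor>t / (2 * pi) + 1 / 2\<rfloor>"
    have m1: "of_int m \<le> t / (2 * pi) + 1 / 2" "t / (2 * pi) + 1 / 2 < of_int m + 1"
      unfolding m_def by linarith+
    define u where "u = t / 2 - of_int m * pi"
    have pipos: "0 < pi" by simp
    have "of_int m * (2 * pi) \<le> t + pi" using m1(1) pipos by (simp add: field_simps)
    moreover have "t + pi < (of_int m + 1) * (2 * pi)" using m1(2) pipos by (simp add: field_simps)
    ultimately have u_bd: "\<bar>u\<bar> \<le> pi / 2" unfolding u_def by (simp add: abs_le_iff field_simps)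
    have sinu: "\<bar>sin (t / 2)\<bar> = \<bar>sin u\<bar>" unfolding u_def by (simp add: sin_shift_abs)
    have u1: "\<bar>u\<bar> \<le> 1"
    proof (rule ccontr)
      assume "\<not> \<bar>u\<bar> \<le> 1"
      have "0 < sin (1::real)" using pi_gt3 by (intro sin_gt_zero) auto
      then have s1: "1 / 2 \<le> sin (1::real)" using sin_lower[of 1] by simp
      have "sin 1 \<le> \<bar>sin u\<bar>"
      proof (cases "0 \<le> u")
        case True
        then have "sin 1 \<le> sin u" using \<open>\<not> \<bar>u\<bar> \<le> 1\<close> u_bd pi_gt3
          by (subst sin_mono_le_eq) auto
        then show ?thesis by linarith
      next
        case False
        then have "sin 1 \<le> sin (- u)" using \<open>\<not> \<bar>u\<bar> \<le> 1\<close> u_bd pi_gt3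
          by (subst sin_mono_le_eq) auto
        then show ?thesis by simp
      qed
      then have "1 \<le> y" using s1 sinu by (simp add: y_def abs_mult)
      then show False using 3 by simp
    qed
    define d where "d = \<bar>t - 2 * pi * of_int m\<bar>"
    have d_eq: "d = 2 * \<bar>u\<bar>"
    proof -
      have "t - 2 * pi * of_int m = 2 * u" unfolding u_def by (simp add: algebra_simps)
      then show ?thesis unfolding d_def by (simp add: abs_mult)
    qed
    have yd: "d / 2 \<le> y" using sin_lower[OF u1] sinu d_eq by (simp add: y_def abs_mult)
    have dpos: "0 < d"
    proof (rule ccontr)
      assume "\<not> 0 < d"
      then have "u = 0" using d_eq by simp
      then show False using 3 sinu by (simp add: y_def abs_mult)
    qed
    have mN: "m \<in> {- int N..int N}"
    proof -
      have "t / (2 * pi) \<le> N" "- real N \<le> t / (2 * pi)" using tN pipos by (auto simp: field_simps abs_le_iff)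
      then show ?thesis using m1 by auto
    qed
    have lnb: "- ln y \<le> 2 * real j * y powr (- 1 / (2 * real j))"
    proof -
      have "ln (y powr (- 1 / (2 * real j))) \<le> y powr (- 1 / (2 * real j)) - 1"
        using 3 by (intro ln_le_minus_one) simp
      then have "(- 1 / (2 * real j)) * ln y \<le> y powr (- 1 / (2 * real j))"
        using 3 by (simp add: ln_powr)
      then show ?thesis using j by (simp add: field_simps)
    qed
    have P: "(y powr (- 1 / (2 * real j))) ^ j = y powr (- 1 / 2)"
      using 3 j by (simp add: powr_realpow[symmetric] powr_powr)
    have Q: "y powr (- 1 / 2) = inverse (sqrt y)"
    proof -
      have "y powr (- 1 / 2) = y powr (- (1 / 2))" by simp
      also have "\<dots> = inverse (y powr (1 / 2))" by (rule powr_minus)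
      also have "y powr (1/2) = sqrt y" using 3 by (intro powr_half_sqrt) simp
      finally show ?thesis .
    qed
    have R: "inverse (sqrt y) \<le> 2 * inverse (sqrt d)"
    proof -
      have "inverse (sqrt y) \<le> inverse (sqrt (d / 2))"
        using yd dpos by (intro le_imp_inverse_le) auto
      also have "inverse (sqrt (d / 2)) = sqrt 2 * inverse (sqrt d)"
        by (subst real_sqrt_divide, subst inverse_divide, rule divide_inverse)
      also have "\<dots> \<le> 2 * inverse (sqrt d)"
      proof -
        have "sqrt 2 \<le> (2::real)" by (rule real_le_lsqrt) auto
        then show ?thesis using dpos by (intro mult_right_mono) auto
      qed
      finally show ?thesis .
    qed
    have T: "inverse (sqrt d) \<le> S"
      unfolding S_def d_def by (rule member_le_sum[OF mN]) auto
    have "\<bar>Afun t\<bar> ^ j = (- ln y) ^ j" using A 3 by simp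
    also have "\<dots> \<le> (2 * real j * y powr (- 1 / (2 * real j))) ^ j"
      using lnb 3 by (intro power_mono) auto
    also have "\<dots> = (2 * real j) ^ j * (y powr (- 1 / (2 * real j))) ^ j"
      by (simp add: power_mult_distrib)
    also have "\<dots> = (2 * real j) ^ j * inverse (sqrt y)" using P Q by simp
    also have "\<dots> \<le> (2 * real j) ^ j * (2 * S)"
      using R T by (intro mult_left_mono) auto
    finally have "\<bar>Afun t\<bar> ^ j \<le> (2 * real j) ^ j * (2 * S)" .
    then show ?thesis by simp
  qed
  then show ?thesis unfolding S_def .
qed



lemma Afun_meas[measurable]: "Afun \<in> borel_measurable borel"
  unfolding Afun_def[abs_def] by measurable

lemma abs_int_to_lborel:
  fixes f :: "real \<Rightarrow> real"
  assumes "f absolutely_integrable_on S" "f \<in> borel_measurable borel" "S \<in> sets borel"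
  shows "set_integrable lborel S f"
proof -
  have m: "(\<lambda>x. indicator S x *\<^sub>R f x) \<in> borel_measurable lborel"
    using assms(2,3) by measurable
  show ?thesis using assms(1) integrable_completion[OF m]
    unfolding set_integrable_def by simp
qed

lemma Apow_int: "set_integrable lborel {a..b} (\<lambda>t. Afun t ^ j)"
proof (cases "j = 0")
  case True
  then show ?thesis by (simp add: borel_integrable_atLeastAtMost')
next
  case False
  define N where "N = nat \<lceil>(\<bar>a\<bar> + \<bar>b\<bar>) / (2 * pi)\<rceil>"
  define D where "D = (\<lambda>t. 1 + 2 * (2 * real j) ^ j * (\<Sum>m\<in>{- int N..int N}. inverse (sqrt \<bar>t - 2 * pi * of_int m\<bar>)))"
  have Sint: "(\<lambda>t. \<Sum>m\<in>{- int N..int N}. inverse (sqrt \<bar>t - 2 * pi * of_int m\<bar>)) integrable_on {a..b}"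
    by (intro integrable_sum finite_atLeastAtMost_int ballI isqrt_int)
  have Dint: "D integrable_on {a..b}"
    unfolding D_def
    by (intro integrable_add integrable_const_ivl integrable_on_cmult_left[OF Sint, simplified])
  have bd: "norm (Afun t ^ j) \<le> D t" if "t \<in> {a..b}" for t
  proof -
    have "\<bar>t\<bar> \<le> \<bar>a\<bar> + \<bar>b\<bar>" using that by auto
    also have "\<dots> = 2 * pi * ((\<bar>a\<bar> + \<bar>b\<bar>) / (2 * pi))" by simp
    also have "\<dots> \<le> 2 * pi * N" unfolding N_def
      by (intro mult_left_mono) (auto simp: real_nat_ceiling_ge)
    finally show ?thesis using A_bound[of j t N] False unfolding D_def by (simp add: power_abs)
  qed
  have "(\<lambda>t. Afun t ^ j) absolutely_integrable_on {a..b}"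
    by (rule measurable_bounded_by_integrable_imp_absolutely_integrable[OF _ _ Dint bd])
       (intro measurable_restrict_space1 measurable_completion, measurable, simp)
  then show ?thesis by (rule abs_int_to_lborel) auto
qed



definition locint :: "(real \<Rightarrow> real) \<Rightarrow> bool" where
  "locint f \<longleftrightarrow> (\<forall>a b. set_integrable lborel {a..b} f)"

lemma locint_cont_mult:
  assumes f: "locint f" "f \<in> borel_measurable borel" and g: "continuous_on UNIV g"
  shows "locint (\<lambda>t. g t * f t)"
  unfolding locint_def
proof (intro allI)
  fix a b :: real
  have "compact (g ` {a..b})" by (rule compact_continuous_image[OF continuous_on_subset[OF g]]) auto
  then have "bounded (g ` {a..b})" by (rule compact_imp_bounded)
  then obtain B where "\<forall>y\<in>g ` {a..b}. norm y \<le> B" unfolding bounded_iff by blast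
  then have B: "\<And>t. t \<in> {a..b} \<Longrightarrow> \<bar>g t\<bar> \<le> B" by auto
  have gm: "g \<in> borel_measurable borel" by (rule borel_measurable_continuous_onI[OF g])
  show "set_integrable lborel {a..b} (\<lambda>t. g t * f t)"
  proof (rule set_integrable_bound[where f="\<lambda>t. B * f t"])
    show "set_integrable lborel {a..b} (\<lambda>t. B * f t)"
      using f(1) unfolding locint_def by (intro set_integrable_mult_right) auto
    show "set_borel_measurable lborel {a..b} (\<lambda>t. g t * f t)"
      unfolding set_borel_measurable_def using gm f(2) by measurable
    show "AE x in lborel. x \<in> {a..b} \<longrightarrow> norm (g x * f x) \<le> norm (B * f x)"
    proof (intro AE_I2 impI)
      fix x assume x: "x \<in> {a..b}"
      have "\<bar>g x\<bar> * \<bar>f x\<bar> \<le> B * \<bar>f x\<bar>" using B[OF x] by (intro mult_right_mono) auto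
      also have "\<dots> \<le> \<bar>B\<bar> * \<bar>f x\<bar>" by (intro mult_right_mono) auto
      finally show "norm (g x * f x) \<le> norm (B * f x)" by (simp add: abs_mult)
    qed
  qed
qed

lemma locint_cont: "continuous_on UNIV f \<Longrightarrow> locint f"
  unfolding locint_def by (auto intro: borel_integrable_atLeastAtMost' continuous_on_subset)

lemma locint_ivl: "locint f \<Longrightarrow> interval_lebesgue_integrable lborel (ereal a) (ereal b) f"
  unfolding interval_lebesgue_integrable_def locint_def
  by (auto intro: set_integrable_subset[where A="{a..b}"] set_integrable_subset[where A="{b..a}"])

lemma locint_sum:
  assumes "locint f"
  shows "(LBINT t=ereal a..ereal b. f t) + (LBINT t=ereal b..ereal c. f t) = (LBINT t=ereal a..ereal c. f t)"
proof (rule interval_integral_sum)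
  have e1: "min (ereal a) (min (ereal b) (ereal c)) = ereal (min a (min b c))" by (simp add: min_def)
  have e2: "max (ereal a) (max (ereal b) (ereal c)) = ereal (max a (max b c))" by (simp add: max_def)
  show "interval_lebesgue_integrable lborel (min (ereal a) (min (ereal b) (ereal c))) (max (ereal a) (max (ereal b) (ereal c))) f"
    unfolding e1 e2 by (rule locint_ivl[OF assms])
qed

lemma locint_contin:
  assumes "locint f"
  shows "continuous_on UNIV (\<lambda>x. LBINT t=ereal 0..ereal x. f t)"
proof (rule continuous_at_imp_continuous_on, intro ballI)
  fix x0 :: real
  define R where "R = \<bar>x0\<bar> + 1"
  have fi: "f integrable_on {-R..R}"
    using assms unfolding locint_def by (auto intro: set_borel_integral_eq_integral(1))
  have c1: "continuous_on {-R..R} (\<lambda>x. integral {-R..x} f - (LBINT t=ereal (-R)..ereal 0. f t))"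
    by (intro continuous_intros indefinite_integral_continuous_1 fi)
  have eq: "integral {-R..x} f - (LBINT t=ereal (-R)..ereal 0. f t) = (LBINT t=ereal 0..ereal x. f t)"
    if "x \<in> {-R..R}" for x
  proof -
    have "integral {-R..x} f = (LBINT t=ereal (-R)..ereal x. f t)"
      using that assms unfolding locint_def by (intro interval_integral_eq_integral[symmetric]) auto
    also have "\<dots> = (LBINT t=ereal (-R)..ereal 0. f t) + (LBINT t=ereal 0..ereal x. f t)"
      using locint_sum[OF assms, of "-R" 0 x] by simp
    finally show ?thesis by simp
  qed
  have c2: "continuous_on {-R..R} (\<lambda>x. LBINT t=ereal 0..ereal x. f t)"
    using continuous_on_eq[OF c1 eq] by blast
  have "x0 \<in> interior {-R..R}" unfolding R_def by auto
  then show "isCont (\<lambda>x. LBINT t=ereal 0..ereal x. f t) x0"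
    using continuous_on_interior[OF c2] by blast
qed

lemma locint_deriv:
  assumes f: "locint f" and x: "c < x" "x < d" and cf: "continuous_on {c..d} f"
  shows "((\<lambda>u. LBINT t=ereal 0..ereal u. f t) has_real_derivative f x) (at x)"
proof -
  have eq: "(\<lambda>u. LBINT t=ereal 0..ereal u. f t) = (\<lambda>u. (LBINT t=ereal 0..ereal c. f t) + (LBINT t=ereal c..ereal u. f t))"
    using locint_sum[OF f, of 0 c] by (auto intro!: ext)
  have "((\<lambda>u. LBINT t=ereal c..ereal u. f t) has_vector_derivative f x) (at x within {c..d})"
    using x by (intro interval_integral_FTC2 cf) auto
  then have "((\<lambda>u. LBINT t=ereal c..ereal u. f t) has_real_derivative f x) (at x)"
    using x by (simp add: has_real_derivative_iff_has_vector_derivative at_within_Icc_at)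
  then have "((\<lambda>u. (LBINT t=ereal 0..ereal c. f t) + (LBINT t=ereal c..ereal u. f t)) has_real_derivative 0 + f x) (at x)"
    by (intro DERIV_add DERIV_const)
  then show ?thesis unfolding eq by simp
qed



type_synonym wrd = "(nat \<times> nat) list"

definition gfun :: "nat \<times> nat \<Rightarrow> real \<Rightarrow> real" where
  "gfun p t = t ^ fst p * Afun t ^ snd p"

definition FW :: "wrd \<Rightarrow> real \<Rightarrow> real" where
  "FW w = itint (map gfun w)"

lemma FW_Nil[simp]: "FW [] x = 1" by (simp add: FW_def)
lemma FW_Cons: "FW (p # w) x = (LBINT t=ereal 0..ereal x. gfun p t * FW w t)"
  by (simp add: FW_def)

lemma gfun_locint:
  assumes "continuous_on UNIV G"
  shows "locint (\<lambda>t. gfun p t * G t)"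
proof -
  have "locint (\<lambda>t. (t ^ fst p * G t) * Afun t ^ snd p)"
  proof (rule locint_cont_mult)
    show "locint (\<lambda>t. Afun t ^ snd p)" unfolding locint_def using Apow_int by blast
    show "(\<lambda>t. Afun t ^ snd p) \<in> borel_measurable borel" by measurable
    show "continuous_on UNIV (\<lambda>t. t ^ fst p * G t)" by (intro continuous_intros assms)
  qed
  then show ?thesis by (simp add: gfun_def mult_ac)
qed

lemma FW_cont: "continuous_on UNIV (FW w)"
proof (induction w)
  case Nil
  then show ?case by (simp add: FW_def)
next
  case (Cons p w)
  have "continuous_on UNIV (\<lambda>x. LBINT t=ereal 0..ereal x. gfun p t * FW w t)"
    by (rule locint_contin[OF gfun_locint[OF Cons.IH]])
  then show ?case by (simp add: FW_Cons[abs_def])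
qed

lemma isCont_Afun: "sin (y / 2) \<noteq> 0 \<Longrightarrow> isCont Afun y"
  unfolding Afun_def[abs_def] by (intro continuous_intros) auto

lemma finite_sin_zeros: "finite {t :: real \<in> {-(R::real)<..<R}. sin (t / 2) = 0}"
proof -
  define M where "M = \<lceil>R\<rceil>"
  have "{t \<in> {-R<..<R}. sin (t / 2) = 0} \<subseteq> (\<lambda>i::int. 2 * pi * of_int i) ` {-M..M}"
  proof
    fix t assume t: "t \<in> {t \<in> {-R<..<R}. sin (t / 2) = 0}"
    then obtain i :: int where i: "t / 2 = of_int i * pi" using sin_zero_iff_int2 by blast
    then have ti: "t = 2 * pi * of_int i" by simp
    have "\<bar>of_int i\<bar> * 1 \<le> \<bar>of_int i\<bar> * (2 * pi)" using pi_gt3 by (intro mult_left_mono) auto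
    also have "\<dots> = \<bar>t\<bar>" using ti pi_gt3 by (simp add: abs_mult)
    also have "\<dots> < R" using t by auto
    finally have "\<bar>real_of_int i\<bar> \<le> R" by simp
    then have "i \<in> {-M..M}" unfolding M_def by (auto simp: abs_le_iff) linarith+
    then show "t \<in> (\<lambda>i::int. 2 * pi * of_int i) ` {-M..M}" using ti by auto
  qed
  then show ?thesis by (rule finite_subset) auto
qed

lemma ibp:
  fixes p :: "nat \<times> nat" and w :: wrd and b :: nat and x :: real
  shows "x ^ (b+1) / (real b + 1) * FW (p # w) x =
    (LBINT t=ereal 0..ereal x. t ^ b * FW (p # w) t) +
    (LBINT t=ereal 0..ereal x. t ^ (b+1) / (real b + 1) * (gfun p t * FW w t))"
proof -
  define h where "h = (\<lambda>t. gfun p t * FW w t)"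
  define F where "F = FW (p # w)"
  have hl: "locint h" unfolding h_def by (rule gfun_locint[OF FW_cont])
  have Fd: "F = (\<lambda>x. LBINT t=ereal 0..ereal x. h t)" unfolding F_def h_def by (auto simp: FW_Cons)
  have Fc: "continuous_on UNIV F" unfolding F_def by (rule FW_cont)
  have l2: "locint (\<lambda>t. t ^ b * F t)" by (intro locint_cont continuous_intros Fc)
  have l3: "locint (\<lambda>t. t ^ (b+1) / (real b + 1) * h t)"
  proof -
    have "locint (\<lambda>t. gfun p t * (t ^ (b+1) / (real b + 1) * FW w t))"
      by (intro gfun_locint continuous_intros FW_cont) auto
    then show ?thesis unfolding h_def by (simp add: mult_ac)
  qed
  define G where "G = (\<lambda>x. x ^ (b+1) / (real b + 1) * F x - (LBINT t=ereal 0..ereal x. t ^ b * F t)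
      - (LBINT t=ereal 0..ereal x. t ^ (b+1) / (real b + 1) * h t))"
  have Gc: "continuous_on UNIV G" unfolding G_def
    by (intro continuous_intros Fc locint_contin l2 l3) auto
  have Gd: "DERIV G y :> 0" if y: "sin (y / 2) \<noteq> 0" for y
  proof -
    have "isCont (\<lambda>y. sin (y / 2)) y" by (intro continuous_intros) simp
    then obtain e where e: "e > 0" "\<And>z. dist y z < e \<Longrightarrow> sin (z / 2) \<noteq> 0"
      using continuous_at_avoid[of y "\<lambda>y. sin (y / 2)" 0] y by blast
    define c where "c = y - e / 2"
    define d where "d = y + e / 2"
    have cy: "c < y" "y < d" unfolding c_def d_def using e by auto
    have hcont: "continuous_on {c..d} h"
    proof (rule continuous_at_imp_continuous_on, intro ballI)
      fix z assume z: "z \<in> {c..d}"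
      then have "dist y z < e" unfolding c_def d_def dist_real_def using e by auto
      then have "isCont Afun z" by (intro isCont_Afun e(2))
      moreover have "isCont (FW w) z" using FW_cont continuous_on_eq_continuous_at by blast
      ultimately show "isCont h z" unfolding h_def gfun_def
        by (intro continuous_intros) (auto intro: continuous_at_compose[unfolded o_def])
    qed
    have D1: "(F has_real_derivative h y) (at y)"
      unfolding Fd by (rule locint_deriv[OF hl cy hcont])
    have D2: "((\<lambda>x. LBINT t=ereal 0..ereal x. t ^ b * F t) has_real_derivative y ^ b * F y) (at y)"
      by (rule locint_deriv[OF l2 cy]) (intro continuous_intros continuous_on_subset[OF Fc], simp)
    have D3: "((\<lambda>x. LBINT t=ereal 0..ereal x. t ^ (b+1) / (real b + 1) * h t) has_real_derivative y ^ (b+1) / (real b + 1) * h y) (at y)"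
      by (rule locint_deriv[OF l3 cy]) (intro continuous_intros hcont, auto)
    have Dp: "((\<lambda>x. x ^ (b+1) / (real b + 1)) has_real_derivative y ^ b) (at y)"
    proof -
      have "((\<lambda>x. x ^ (b+1) / (real b + 1)) has_real_derivative (real (b+1) * y ^ b) / (real b + 1)) (at y)"
        by (intro DERIV_cdivide) (use DERIV_pow[of "b+1" y] in simp)
      then show ?thesis by (simp add: add.commute)
    qed
    have "(G has_real_derivative (y ^ b * F y + y ^ (b+1) / (real b + 1) * h y) - y ^ b * F y - y ^ (b+1) / (real b + 1) * h y) (at y)"
      unfolding G_def using DERIV_diff[OF DERIV_diff[OF DERIV_mult[OF Dp D1] D2] D3] by (simp add: mult_ac)
    then show ?thesis by simp
  qed
  define R where "R = \<bar>x\<bar> + 1"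
  obtain C where C: "\<And>z. z \<in> {-R<..<R} \<Longrightarrow> G z = C"
  proof (rule DERIV_zero_connected_constant[of "{-R<..<R}" "{t \<in> {-R<..<R}. sin (t / 2) = 0}" G])
    show "connected {-R<..<R}" by simp
    show "open {-R<..<R}" by simp
    show "finite {t \<in> {-R<..<R}. sin (t / 2) = 0}" by (rule finite_sin_zeros)
    show "continuous_on {-R<..<R} G" using Gc continuous_on_subset by blast
    show "\<forall>z\<in>{-R<..<R} - {t \<in> {-R<..<R}. sin (t / 2) = 0}. DERIV G z :> 0" using Gd by auto
  qed auto
  have "G 0 = 0" unfolding G_def by simp
  moreover have "0 \<in> {-R<..<R}" "x \<in> {-R<..<R}" unfolding R_def by auto
  ultimately have "G x = 0" using C by metis
  then show ?thesis unfolding G_def h_def F_def by simp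
qed



definition wt :: "wrd \<Rightarrow> nat" where "wt w = sum_list (map (\<lambda>(a,j). a + j + 1) w)"
definition sd :: "wrd \<Rightarrow> nat" where "sd w = sum_list (map snd w)"
definition red :: "wrd \<Rightarrow> bool" where "red w \<longleftrightarrow> (\<forall>p\<in>set w. 1 \<le> snd p)"

lemma wt_simps[simp]: "wt [] = 0" "wt ((a,j) # w) = a + j + 1 + wt w" by (simp_all add: wt_def)
lemma sd_simps[simp]: "sd [] = 0" "sd ((a,j) # w) = j + sd w" by (simp_all add: sd_def)
lemma red_simps[simp]: "red []" "red ((a,j) # w) \<longleftrightarrow> 1 \<le> j \<and> red w" by (simp_all add: red_def)

definition lc :: "(real \<times> nat \<times> wrd) list \<Rightarrow> real \<Rightarrow> real" where
  "lc cs x = sum_list (map (\<lambda>(c,m,w). c * x ^ m * FW w x) cs)"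

lemma lc_simps[simp]: "lc [] x = 0" "lc ((c,m,w) # cs) x = c * x ^ m * FW w x + lc cs x"
  by (simp_all add: lc_def)

lemma lc_append[simp]: "lc (xs @ ys) x = lc xs x + lc ys x" by (simp add: lc_def)

definition scl :: "real \<Rightarrow> (real \<times> nat \<times> wrd) list \<Rightarrow> (real \<times> nat \<times> wrd) list" where
  "scl c cs = map (\<lambda>(c',m',w'). (c * c', m', w')) cs"

lemma lc_scale: "lc (scl c cs) x = c * lc cs x"
  unfolding scl_def by (induction cs) (auto simp: algebra_simps)

lemma lc_cont: "continuous_on UNIV (lc cs)"
proof (induction cs)
  case Nil
  then show ?case by (simp add: lc_def[abs_def])
next
  case (Cons a cs)
  obtain c m w where a: "a = (c, m, w)" by (cases a) auto
  have "continuous_on UNIV (\<lambda>x. c * x ^ m * FW w x + lc cs x)"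
    by (intro continuous_intros FW_cont Cons.IH)
  then show ?case unfolding a by (simp add: lc_simps[abs_def] del: lc_simps)
qed

definition push :: "nat \<Rightarrow> nat \<Rightarrow> (real \<times> nat \<times> wrd) list \<Rightarrow> (real \<times> nat \<times> wrd) list" where
  "push a j cs = map (\<lambda>(c,m,w). (c, 0, (a + m, j) # w)) cs"

lemma push_simps[simp]: "push a j [] = []" "push a j ((c,m,w) # cs) = (c, 0, (a + m, j) # w) # push a j cs"
  by (simp_all add: push_def)

lemma push_lc: "(LBINT t=ereal 0..ereal x. gfun (a,j) t * lc cs t) = lc (push a j cs) x"
proof (induction cs)
  case Nil
  then show ?case by simp
next
  case (Cons p cs)
  obtain c m w where p: "p = (c, m, w)" by (cases p) auto
  have eq: "(\<lambda>t. gfun (a,j) t * lc (p # cs) t) = (\<lambda>t. gfun (a + m, j) t * (c * FW w t) + gfun (a,j) t * lc cs t)"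
    unfolding p by (auto simp: gfun_def power_add algebra_simps)
  have i1: "interval_lebesgue_integrable lborel (ereal 0) (ereal x) (\<lambda>t. gfun (a + m, j) t * (c * FW w t))"
    by (intro locint_ivl gfun_locint continuous_intros FW_cont)
  have i2: "interval_lebesgue_integrable lborel (ereal 0) (ereal x) (\<lambda>t. gfun (a,j) t * lc cs t)"
    by (intro locint_ivl gfun_locint lc_cont)
  have "(LBINT t=ereal 0..ereal x. gfun (a,j) t * lc (p # cs) t)
      = (LBINT t=ereal 0..ereal x. gfun (a + m, j) t * (c * FW w t)) + (LBINT t=ereal 0..ereal x. gfun (a,j) t * lc cs t)"
    unfolding eq by (rule interval_lebesgue_integral_add(2)[OF i1 i2])
  also have "(LBINT t=ereal 0..ereal x. gfun (a + m, j) t * (c * FW w t)) = c * FW ((a + m, j) # w) x"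
  proof -
    have "(\<lambda>t. gfun (a + m, j) t * (c * FW w t)) = (\<lambda>t. c * (gfun (a + m, j) t * FW w t))" by (auto simp: mult_ac)
    then show ?thesis by (simp add: FW_Cons)
  qed
  finally show ?case using Cons.IH unfolding p by simp
qed

lemma pow_int: "(LBINT t=ereal 0..ereal x. t ^ b) = x ^ (b+1) / (real b + 1)"
proof -
  have "(LBINT t=ereal 0..ereal x. t ^ b) = x ^ (b+1) / (real b + 1) - 0 ^ (b+1) / (real b + 1)"
  proof (rule interval_integral_FTC_finite)
    show "continuous_on {min 0 x..max 0 x} (\<lambda>t. t ^ b)" by (intro continuous_intros)
    fix y :: real
    have "((\<lambda>x. x ^ (b+1) / (real b + 1)) has_real_derivative (real (b+1) * y ^ b) / (real b + 1)) (at y)"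
      by (intro DERIV_cdivide) (use DERIV_pow[of "b+1" y] in simp)
    then have "((\<lambda>x. x ^ (b+1) / (real b + 1)) has_real_derivative y ^ b) (at y)" by (simp add: add.commute)
    then show "((\<lambda>x. x ^ (b+1) / (real b + 1)) has_vector_derivative y ^ b) (at y within {min 0 x..max 0 x})"
      by (simp add: has_real_derivative_iff_has_vector_derivative has_vector_derivative_at_within)
  qed
  then show ?thesis by simp
qed

lemma FW_single: "FW [(b, 0)] x = x ^ (b+1) / (real b + 1)"
  using pow_int[of x b] by (simp add: FW_Cons gfun_def)

lemma ibp2:
  "FW ((b, 0) # (a, j) # w) x = x ^ (b+1) / (real b + 1) * FW ((a, j) # w) x - 1 / (real b + 1) * FW ((a + b + 1, j) # w) x"
proof -
  have "x ^ (b+1) / (real b + 1) * FW ((a, j) # w) x =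
    (LBINT t=ereal 0..ereal x. t ^ b * FW ((a, j) # w) t) +
    (LBINT t=ereal 0..ereal x. t ^ (b+1) / (real b + 1) * (gfun (a, j) t * FW w t))"
    by (rule ibp)
  moreover have "(LBINT t=ereal 0..ereal x. t ^ b * FW ((a, j) # w) t) = FW ((b, 0) # (a, j) # w) x"
    by (subst (2) FW_Cons) (simp add: gfun_def)
  moreover have "(LBINT t=ereal 0..ereal x. t ^ (b+1) / (real b + 1) * (gfun (a, j) t * FW w t)) = 1 / (real b + 1) * FW ((a + b + 1, j) # w) x"
  proof -
    have "(\<lambda>t. t ^ (b+1) / (real b + 1) * (gfun (a, j) t * FW w t)) = (\<lambda>t. 1 / (real b + 1) * (gfun (a + b + 1, j) t * FW w t))"
      by (auto simp: gfun_def power_add field_simps)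
    then show ?thesis by (simp add: FW_Cons)
  qed
  ultimately have "x ^ (b+1) / (real b + 1) * FW ((a, j) # w) x = FW ((b, 0) # (a, j) # w) x + 1 / (real b + 1) * FW ((a + b + 1, j) # w) x"
    by metis
  then show ?thesis by (simp only: eq_diff_eq)
qed

definition goodR :: "nat \<Rightarrow> nat \<Rightarrow> (real \<times> nat \<times> wrd) list \<Rightarrow> bool" where
  "goodR n s cs \<longleftrightarrow> (\<forall>(c,m,w)\<in>set cs. c \<in> \<rat> \<and> red w \<and> m + wt w = n \<and> sd w = s)"

definition goodL :: "nat \<Rightarrow> nat \<Rightarrow> (real \<times> nat \<times> wrd) list \<Rightarrow> bool" where
  "goodL n s cs \<longleftrightarrow> (\<forall>(c,m,w)\<in>set cs. c \<in> \<rat> \<and> m = 0 \<and> wt w = n \<and> sd w = s)"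

lemma red_poly:
  assumes "red w"
  shows "\<exists>cs. goodR (b + 1 + wt w) (sd w) cs \<and> (\<forall>x. FW ((b, 0) # w) x = lc cs x)"
proof (cases w)
  case Nil
  show ?thesis
    by (rule exI[of _ "[(1 / (real b + 1), b+1, [])]"])
       (auto simp: goodR_def Nil FW_single)
next
  case (Cons p w')
  obtain a j where p: "p = (a, j)" by (cases p) auto
  have hj: "1 \<le> j" "red w'" using assms unfolding Cons p by auto
  show ?thesis
  proof (intro exI conjI allI)
    show "goodR (b + 1 + wt w) (sd w) [(1 / (real b + 1), b+1, w), (- 1 / (real b + 1), 0, (a + b + 1, j) # w')]"
      using hj assms unfolding goodR_def Cons p by auto
    fix x
    show "FW ((b, 0) # w) x = lc [(1 / (real b + 1), b+1, w), (- 1 / (real b + 1), 0, (a + b + 1, j) # w')] x"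
      unfolding Cons p ibp2 by simp
  qed
qed

lemma comb0:
  assumes "goodR n s cs0"
  shows "\<exists>cs. goodR (a + 1 + n) s cs \<and> (\<forall>x. lc (push a 0 cs0) x = lc cs x)"
  using assms
proof (induction cs0)
  case Nil
  then show ?case by (intro exI[of _ "[]"]) (auto simp: goodR_def)
next
  case (Cons q cs0)
  obtain c m w where q: "q = (c, m, w)" by (cases q) auto
  have h: "c \<in> \<rat>" "red w" "m + wt w = n" "sd w = s" "goodR n s cs0"
    using Cons.prems unfolding q goodR_def by auto
  obtain cs' where cs': "goodR (a + 1 + n) s cs'" "\<forall>x. lc (push a 0 cs0) x = lc cs' x"
    using Cons.IH[OF h(5)] by blast
  obtain cs1 where cs1: "goodR (a + m + 1 + wt w) (sd w) cs1" "\<forall>x. FW ((a + m, 0) # w) x = lc cs1 x"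
    using red_poly[OF h(2), of "a + m"] by blast
  show ?case
  proof (intro exI conjI allI)
    show "goodR (a + 1 + n) s (scl c cs1 @ cs')"
      using cs'(1) cs1(1) h unfolding goodR_def scl_def by (auto simp: Rats_mult)

    fix x
    show "lc (push a 0 (q # cs0)) x = lc (scl c cs1 @ cs') x"
      unfolding q using cs'(2) cs1(2) by (simp add: lc_scale)
  qed
qed

lemma reduce: "\<exists>cs. goodR (wt w) (sd w) cs \<and> (\<forall>x. FW w x = lc cs x)"
proof (induction w)
  case Nil
  show ?case by (rule exI[of _ "[(1, 0, [])]"]) (auto simp: goodR_def)
next
  case (Cons p w0)
  obtain a j where p: "p = (a, j)" by (cases p) auto
  obtain cs0 where cs0: "goodR (wt w0) (sd w0) cs0" "\<forall>x. FW w0 x = lc cs0 x" using Cons.IH by blast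
  have FWe: "FW w0 = lc cs0" using cs0(2) by auto
  have main: "FW (p # w0) x = lc (push a j cs0) x" for x
    unfolding p FW_Cons FWe by (rule push_lc)
  show ?case
  proof (cases "j = 0")
    case False
    show ?thesis
    proof (intro exI conjI allI)
      show "goodR (wt (p # w0)) (sd (p # w0)) (push a j cs0)"
        using cs0(1) False unfolding goodR_def push_def p by auto
      show "FW (p # w0) x = lc (push a j cs0) x" for x by (rule main)
    qed
  next
    case True
    obtain cs where cs: "goodR (a + 1 + wt w0) (sd w0) cs" "\<forall>x. lc (push a 0 cs0) x = lc cs x"
      using comb0[OF cs0(1), of a] by blast
    show ?thesis
      by (rule exI[of _ cs]) (use cs main True p in auto)
  qed
qed

lemma expand: "\<exists>cs. goodL (wt w + (b + 1)) (sd w) cs \<and> (\<forall>x. x ^ (b+1) / (real b + 1) * FW w x = lc cs x)"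
proof (induction w)
  case Nil
  show ?case by (rule exI[of _ "[(1, 0, [(b, 0)])]"]) (auto simp: goodL_def FW_single)
next
  case (Cons p w0)
  obtain a j where p: "p = (a, j)" by (cases p) auto
  obtain cs0 where cs0: "goodL (wt w0 + (b + 1)) (sd w0) cs0" "\<forall>x. x ^ (b+1) / (real b + 1) * FW w0 x = lc cs0 x"
    using Cons.IH by blast
  have e0: "(\<lambda>t. gfun (a, j) t * (t ^ (b+1) / (real b + 1) * FW w0 t)) = (\<lambda>t. gfun (a, j) t * lc cs0 t)"
    using cs0(2) by auto
  have main: "x ^ (b+1) / (real b + 1) * FW (p # w0) x = FW ((b, 0) # p # w0) x + lc (push a j cs0) x" for x
  proof -
    have "x ^ (b+1) / (real b + 1) * FW (p # w0) x =
      (LBINT t=ereal 0..ereal x. t ^ b * FW (p # w0) t) +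
      (LBINT t=ereal 0..ereal x. t ^ (b+1) / (real b + 1) * (gfun p t * FW w0 t))"
      by (rule ibp)
    moreover have "(LBINT t=ereal 0..ereal x. t ^ b * FW (p # w0) t) = FW ((b, 0) # p # w0) x"
      by (subst (2) FW_Cons) (simp add: gfun_def)
    moreover have "(LBINT t=ereal 0..ereal x. t ^ (b+1) / (real b + 1) * (gfun p t * FW w0 t)) = lc (push a j cs0) x"
    proof -
      have "(\<lambda>t. t ^ (b+1) / (real b + 1) * (gfun p t * FW w0 t)) = (\<lambda>t. gfun (a, j) t * (t ^ (b+1) / (real b + 1) * FW w0 t))"
        unfolding p by (auto simp: mult_ac)
      then show ?thesis using e0 push_lc by simp
    qed
    ultimately show ?thesis by simp
  qed
  show ?case
  proof (intro exI conjI allI)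
    show "goodL (wt (p # w0) + (b + 1)) (sd (p # w0)) ((1, 0, (b, 0) # p # w0) # push a j cs0)"
      using cs0(1) unfolding goodL_def push_def p by auto
    show "x ^ (b+1) / (real b + 1) * FW (p # w0) x = lc ((1, 0, (b, 0) # p # w0) # push a j cs0) x" for x
      using main by simp
  qed
qed



lemma qspan_mem: "x \<in> S \<Longrightarrow> x \<in> qspan S"
  unfolding qspan_def by (rule CollectI, rule exI[of _ "{x}"], rule exI[of _ "\<lambda>_. 1"]) auto

lemma qspan_zero: "0 \<in> qspan S"
  unfolding qspan_def by (rule CollectI, rule exI[of _ "{}"]) auto

lemma qspan_add:
  assumes "x \<in> qspan S" "y \<in> qspan S" shows "x + y \<in> qspan S"
proof -
  obtain F1 c1 where 1: "finite F1" "F1 \<subseteq> S" "\<forall>s\<in>F1. c1 s \<in> \<rat>" "x = (\<Sum>s\<in>F1. c1 s * s)"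
    using assms(1) unfolding qspan_def by blast
  obtain F2 c2 where 2: "finite F2" "F2 \<subseteq> S" "\<forall>s\<in>F2. c2 s \<in> \<rat>" "y = (\<Sum>s\<in>F2. c2 s * s)"
    using assms(2) unfolding qspan_def by blast
  define c where "c s = (if s \<in> F1 then c1 s else 0) + (if s \<in> F2 then c2 s else 0)" for s
  have "(\<Sum>s\<in>F1 \<union> F2. c s * s) = (\<Sum>s\<in>F1 \<union> F2. (if s \<in> F1 then c1 s * s else 0)) + (\<Sum>s\<in>F1 \<union> F2. (if s \<in> F2 then c2 s * s else 0))"
    unfolding sum.distrib[symmetric] by (intro sum.cong) (auto simp: c_def distrib_right)

  also have "(\<Sum>s\<in>F1 \<union> F2. (if s \<in> F1 then c1 s * s else 0)) = x"
    using 1 2 by (simp add: sum.inter_restrict[symmetric] Int_absorb1)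
  also have "(\<Sum>s\<in>F1 \<union> F2. (if s \<in> F2 then c2 s * s else 0)) = y"
    using 1 2 by (simp add: sum.inter_restrict[symmetric] Int_absorb1)
  finally have e: "(\<Sum>s\<in>F1 \<union> F2. c s * s) = x + y" .
  have r: "\<forall>s\<in>F1 \<union> F2. c s \<in> \<rat>" using 1 2 unfolding c_def by auto
  show ?thesis unfolding qspan_def
    by (rule CollectI, rule exI[of _ "F1 \<union> F2"], rule exI[of _ c]) (use 1 2 e r in auto)
qed

lemma qspan_scale:
  assumes "x \<in> qspan S" "a \<in> \<rat>" shows "a * x \<in> qspan S"
proof -
  obtain F c where 1: "finite F" "F \<subseteq> S" "\<forall>s\<in>F. c s \<in> \<rat>" "x = (\<Sum>s\<in>F. c s * s)"
    using assms(1) unfolding qspan_def by blast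
  have "a * x = (\<Sum>s\<in>F. (a * c s) * s)" using 1 by (simp add: sum_distrib_left mult.assoc)
  moreover have "\<forall>s\<in>F. a * c s \<in> \<rat>" using 1 assms(2) by auto
  ultimately show ?thesis using 1 unfolding qspan_def
    by (intro CollectI exI[of _ F] exI[of _ "\<lambda>s. a * c s"]) auto

qed

lemma qspan_sum:
  assumes "finite F" "\<And>s. s \<in> F \<Longrightarrow> f s \<in> qspan S"
  shows "(\<Sum>s\<in>F. f s) \<in> qspan S"
  using assms by (induction F rule: finite_induct) (auto intro: qspan_add qspan_zero)

lemma qspan_mono:
  assumes "S \<subseteq> qspan T" shows "qspan S \<subseteq> qspan T"
proof
  fix x assume "x \<in> qspan S"
  then obtain F c where 1: "finite F" "F \<subseteq> S" "\<forall>s\<in>F. c s \<in> \<rat>" "x = (\<Sum>s\<in>F. c s * s)"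
    unfolding qspan_def by blast
  show "x \<in> qspan T" unfolding 1(4)
    using 1 assms by (intro qspan_sum qspan_scale) auto
qed

lemma qspan_sign: "x \<in> qspan S \<Longrightarrow> (-1) ^ n * x \<in> qspan S"
  by (rule qspan_scale) (auto simp: Rats_minus_iff)

lemma qspan_lc:
  assumes "\<And>c m w. (c, m, w) \<in> set cs \<Longrightarrow> c \<in> \<rat> \<and> \<sigma> ^ m * FW w \<sigma> \<in> qspan S"
  shows "lc cs \<sigma> \<in> qspan S"
  using assms
proof (induction cs)
  case Nil
  then show ?case by (simp add: qspan_zero)
next
  case (Cons q cs)
  obtain c m w where q: "q = (c, m, w)" by (cases q) auto
  have h: "c \<in> \<rat>" "\<sigma> ^ m * FW w \<sigma> \<in> qspan S" using Cons.prems[of c m w] q by auto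
  have "c * (\<sigma> ^ m * FW w \<sigma>) \<in> qspan S" by (rule qspan_scale[OF h(2) h(1)])
  moreover have "lc cs \<sigma> \<in> qspan S" using Cons.IH Cons.prems by auto
  ultimately show ?case unfolding q by (simp add: qspan_add mult.assoc)
qed

definition wordof :: "nat list \<Rightarrow> nat list \<Rightarrow> wrd" where
  "wordof ks ls = rev (map (\<lambda>(k,l). (l, k - 1 - l)) (zip ks ls))"

definition ksof :: "wrd \<Rightarrow> nat list" where "ksof w = rev (map (\<lambda>(a,j). a + j + 1) w)"
definition lsof :: "wrd \<Rightarrow> nat list" where "lsof w = rev (map fst w)"

lemma Ls_FW: "Ls ks ls \<sigma> = (-1) ^ length ks * FW (wordof ks ls) \<sigma>"
proof -
  have e: "(\<lambda>(k,l). lsint k l) = gfun \<circ> (\<lambda>(k,l). (l, k - 1 - l))"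
    by (auto simp: lsint_def gfun_def fun_eq_iff)
  show ?thesis unfolding Ls_def FW_def wordof_def e by (simp add: rev_map)
qed

lemma sdeg_zip: "length ks = length ls \<Longrightarrow> sdeg ks ls = sum_list (map (\<lambda>(k,l). k - 1 - l) (zip ks ls))"
  by (simp add: sdeg_def sum_list_sum_nth atLeast0LessThan)


lemma cond_zip: "length ks = length ls \<Longrightarrow> (\<forall>u<length ks. P (ks ! u) (ls ! u)) \<longleftrightarrow> (\<forall>(k,l)\<in>set (zip ks ls). P k l)"
  by (auto simp: set_zip)

lemma wt_wordof:
  "length ks = length ls \<Longrightarrow> (\<forall>(k,l)\<in>set (zip ks ls). l + 1 \<le> k) \<Longrightarrow> wt (wordof ks ls) = sum_list ks"
proof (induction ks ls rule: list_induct2)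
  case Nil
  then show ?case by (simp add: wordof_def)
next
  case (Cons k ks l ls)
  then show ?case by (auto simp: wordof_def wt_def)
qed

lemma sd_wordof: "length ks = length ls \<Longrightarrow> sd (wordof ks ls) = sdeg ks ls"
  by (simp add: sdeg_zip wordof_def sd_def rev_map[symmetric] case_prod_beta' comp_def)

lemma zip_ksof: "zip (ksof w) (lsof w) = rev (map (\<lambda>(a,j). (a + j + 1, a)) w)"
  unfolding ksof_def lsof_def by (induction w) auto

lemma wordof_ksof: "wordof (ksof w) (lsof w) = w"
  unfolding wordof_def zip_ksof by (induction w) auto

lemma len_ksof[simp]: "length (ksof w) = length w" "length (lsof w) = length w"
  by (simp_all add: ksof_def lsof_def)

lemma sum_ksof: "sum_list (ksof w) = wt w"
  by (induction w) (auto simp: ksof_def wt_def)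

lemma sdeg_ksof: "sdeg (ksof w) (lsof w) = sd w"
  using sd_wordof[of "ksof w" "lsof w"] wordof_ksof[of w] by simp

lemma FW_Ls: "FW w \<sigma> = (-1) ^ length w * Ls (ksof w) (lsof w) \<sigma>"
  using Ls_FW[of "ksof w" "lsof w" \<sigma>] wordof_ksof[of w] by (simp add: power_mult_distrib[symmetric])

lemma len_le_wt: "length w \<le> wt w"
  by (induction w) (auto simp: wt_def)

lemma len_le_wt_red: "red w \<Longrightarrow> 2 * length w \<le> wt w"
  by (induction w) (auto simp: wt_def red_def)

lemma FW_in_L:
  assumes "wt w = k" "sd w \<le> d" "odd (sd w) = p"
  shows "FW w \<sigma> \<in> qspan (Lset p k d \<sigma>)"
proof -
  have "Ls (ksof w) (lsof w) \<sigma> \<in> Lset p k d \<sigma>"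
    unfolding Lset_def
  proof (intro CollectI exI conjI)
    show "length (lsof w) = length (ksof w)" by simp
    show "length (ksof w) \<le> k" using len_le_wt[of w] assms by simp
    show "sum_list (ksof w) = k" using assms sum_ksof by simp
    show "\<forall>u<length (ksof w). 1 \<le> ksof w ! u \<and> lsof w ! u + 1 \<le> ksof w ! u"
      by (subst cond_zip) (auto simp: zip_ksof)
    show "sdeg (ksof w) (lsof w) \<le> d" "odd (sdeg (ksof w) (lsof w)) = p" using assms sdeg_ksof by auto
  qed simp
  then show ?thesis unfolding FW_Ls by (intro qspan_sign qspan_mem)
qed

lemma FW_in_M:
  assumes "red w" "m + wt w = k" "sd w \<le> d" "odd (sd w) = p"
  shows "\<sigma> ^ m * FW w \<sigma> \<in> qspan (Mset p k d \<sigma>)"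
proof -
  have "\<sigma> ^ m * Ls (ksof w) (lsof w) \<sigma> \<in> Mset p k d \<sigma>"
    unfolding Mset_def
  proof (intro CollectI exI conjI)
    show "length (lsof w) = length (ksof w)" by simp
    show "length (ksof w) \<le> k" using len_le_wt_red[OF assms(1)] assms by simp
    show "m + sum_list (ksof w) = k" using assms sum_ksof by simp
    show "\<forall>u<length (ksof w). 2 \<le> ksof w ! u \<and> lsof w ! u + 2 \<le> ksof w ! u"
      using assms(1) by (subst cond_zip) (auto simp: zip_ksof red_def)
    show "sdeg (ksof w) (lsof w) \<le> d" "odd (sdeg (ksof w) (lsof w)) = p" using assms sdeg_ksof by auto
  qed simp
  then have "(-1) ^ length w * (\<sigma> ^ m * Ls (ksof w) (lsof w) \<sigma>) \<in> qspan (Mset p k d \<sigma>)"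
    by (intro qspan_sign qspan_mem)
  then show ?thesis unfolding FW_Ls by (simp add: mult_ac)
qed

lemma L_sub_M: "Lset p k d \<sigma> \<subseteq> qspan (Mset p k d \<sigma>)"
proof
  fix v assume "v \<in> Lset p k d \<sigma>"
  then obtain ks ls where v: "v = Ls ks ls \<sigma>" and len: "length ls = length ks" and sk: "sum_list ks = k"
    and cond: "\<forall>u<length ks. 1 \<le> ks ! u \<and> ls ! u + 1 \<le> ks ! u"
    and sdd: "sdeg ks ls \<le> d" "odd (sdeg ks ls) = p"
    unfolding Lset_def by blast
  define w where "w = wordof ks ls"
  have c2: "\<forall>(k,l)\<in>set (zip ks ls). l + 1 \<le> k" using cond len by (subst (asm) cond_zip) auto
  have wtw: "wt w = k" unfolding w_def using wt_wordof[OF len[symmetric] c2] sk by simp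
  have sdw: "sd w = sdeg ks ls" unfolding w_def using sd_wordof len by simp
  obtain cs where cs: "goodR (wt w) (sd w) cs" "\<forall>x. FW w x = lc cs x" using reduce by blast
  have "lc cs \<sigma> \<in> qspan (Mset p k d \<sigma>)"
  proof (rule qspan_lc)
    fix c m w' assume "(c, m, w') \<in> set cs"
    then have "c \<in> \<rat>" "red w'" "m + wt w' = k" "sd w' = sd w" using cs(1) wtw unfolding goodR_def by auto
    then show "c \<in> \<rat> \<and> \<sigma> ^ m * FW w' \<sigma> \<in> qspan (Mset p k d \<sigma>)"
      using FW_in_M[of w' m k d p \<sigma>] sdw sdd by auto
  qed
  then have "(-1) ^ length ks * FW w \<sigma> \<in> qspan (Mset p k d \<sigma>)" using cs(2) by (simp add: qspan_sign)
  then show "v \<in> qspan (Mset p k d \<sigma>)" unfolding v Ls_FW w_def .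
qed

lemma M_sub_L: "Mset p k d \<sigma> \<subseteq> qspan (Lset p k d \<sigma>)"
proof
  fix v assume "v \<in> Mset p k d \<sigma>"
  then obtain m ks ls where v: "v = \<sigma> ^ m * Ls ks ls \<sigma>" and len: "length ls = length ks" and sk: "m + sum_list ks = k"
    and lk: "length ks \<le> k"
    and cond: "\<forall>u<length ks. 2 \<le> ks ! u \<and> ls ! u + 2 \<le> ks ! u"
    and sdd: "sdeg ks ls \<le> d" "odd (sdeg ks ls) = p"
    unfolding Mset_def by blast
  define w where "w = wordof ks ls"
  have c2: "\<forall>(k,l)\<in>set (zip ks ls). l + 1 \<le> k" using cond len by (subst (asm) cond_zip) auto
  have wtw: "m + wt w = k" unfolding w_def using wt_wordof[OF len[symmetric] c2] sk by simp
  have sdw: "sd w = sdeg ks ls" unfolding w_def using sd_wordof len by simp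
  have "\<sigma> ^ m * FW w \<sigma> \<in> qspan (Lset p k d \<sigma>)"
  proof (cases m)
    case 0
    then show ?thesis using FW_in_L[of w k d p \<sigma>] wtw sdw sdd by simp
  next
    case (Suc b)
    obtain cs where cs: "goodL (wt w + (b + 1)) (sd w) cs" "\<forall>x. x ^ (b+1) / (real b + 1) * FW w x = lc cs x"
      using expand by blast
    have "lc cs \<sigma> \<in> qspan (Lset p k d \<sigma>)"
    proof (rule qspan_lc)
      fix c m' w' assume "(c, m', w') \<in> set cs"
      then have "c \<in> \<rat>" "m' = 0" "wt w' = k" "sd w' = sd w" using cs(1) wtw Suc unfolding goodL_def by auto
      then show "c \<in> \<rat> \<and> \<sigma> ^ m' * FW w' \<sigma> \<in> qspan (Lset p k d \<sigma>)"
        using FW_in_L[of w' k d p \<sigma>] sdw sdd by auto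
    qed
    then have "(real b + 1) * lc cs \<sigma> \<in> qspan (Lset p k d \<sigma>)"
      by (rule qspan_scale) (simp add: Rats_add)
    moreover have "(real b + 1) * lc cs \<sigma> = \<sigma> ^ m * FW w \<sigma>"
      using cs(2) Suc by (simp add: field_simps)
    ultimately show ?thesis by simp
  qed
  then have "(-1) ^ length ks * (\<sigma> ^ m * FW w \<sigma>) \<in> qspan (Lset p k d \<sigma>)" by (rule qspan_sign)
  then show "v \<in> qspan (Lset p k d \<sigma>)" unfolding v Ls_FW w_def by (simp add: mult_ac)
qed

lemma span_eq: "qspan (Lset p k d \<sigma>) = qspan (Mset p k d \<sigma>)"
  using qspan_mono[OF L_sub_M] qspan_mono[OF M_sub_L] by blast

theorem theorem8:
  fixes \<sigma> :: real and k d :: nat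
  shows "qspan (Lset True k d \<sigma>) = qspan (Mset True k d \<sigma>) \<and>
         qspan (Lset False k d \<sigma>) = qspan (Mset False k d \<sigma>)"
  using span_eq by blast

end
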